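(* If $\phi$ is a Young function and $f:\mathbb{R}^{N}\rightarrow [0,\infty ]$ is measurable, then $\|f\|_{\phi }\leq \|\hat{f}\|_{\phi }$.
   Context: A Young function is a nonconstant $\phi:[0,\infty]\to[0,\infty]$ with $\phi(0)=0$, nondecreasing, convex and left continuous; $\|h\|_{\phi}:=\inf\{r>0:\int_{\mathbb{R}^N}\phi(r^{-1}|h|)\le 1\}$ ($=\infty$ if no such $r$). Enclosing balls: for nonempty bounded $X\subset\mathbb{R}^N$, $\overline{B}_X$ is the unique closed ball of minimal diameter containing $X$; $\overline{B}_X:=\mathbb{R}^N$ if $X$ unbounded; $\overline{B}_\emptyset:=\{0\}$. For $f:\mathbb{R}^N\to[-\infty,\infty]$, $\rho^+_f(\xi)\in[0,\infty]$ is the radius of $\overline{B}_{\{f>\xi\}}$, $\gamma^+_f(t):=\inf\{\xi:\rho^+_f(\xi)\le t\}$ for $t\ge0$, and $\hat f(x):=\gamma^+_f(|x|)$ (a measurable function). *)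

theory Defs
  imports "HOL-Analysis.Analysis"
begin

definition young_function :: "(ennreal \<Rightarrow> ennreal) \<Rightarrow> bool" where
  "young_function \<phi> \<longleftrightarrow>
     (\<exists>s t. \<phi> s \<noteq> \<phi> t) \<and>
     \<phi> 0 = 0 \<and>
     mono \<phi> \<and>
     (\<forall>s t (l::real). 0 \<le> l \<and> l \<le> 1 \<longrightarrow>
        \<phi> (ennreal l * s + ennreal (1 - l) * t) \<le> ennreal l * \<phi> s + ennreal (1 - l) * \<phi> t) \<and>
     (\<forall>t. 0 < t \<longrightarrow> (\<phi> \<longlongrightarrow> \<phi> t) (at_left t))"

text \<open>Luxemburg norm; Inf of the empty set of ennreal is \<infinity>.\<close>
definition orlicz_norm :: "(ennreal \<Rightarrow> ennreal) \<Rightarrow> ('a::euclidean_space \<Rightarrow> ereal) \<Rightarrow> ennreal" where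
  "orlicz_norm \<phi> h = Inf (ennreal ` {r::real. 0 < r \<and>
      (\<integral>\<^sup>+ x. \<phi> (ennreal (1 / r) * e2ennreal \<bar>h x\<bar>) \<partial>lebesgue) \<le> 1})"

text \<open>Radius of the closed ball of minimal diameter containing X
  (the minimal radius is unique); \<infinity> for unbounded X, 0 for the empty set
  (whose enclosing ball is {0}).\<close>
definition encl_radius :: "'a::euclidean_space set \<Rightarrow> ereal" where
  "encl_radius X = (if X = {} then 0 else if bounded X then
      ereal (THE r. (\<exists>c. X \<subseteq> cball c r) \<and> (\<forall>c' r'. X \<subseteq> cball c' r' \<longrightarrow> r \<le> r'))
    else \<infinity>)"

definition rho_plus :: "('a::euclidean_space \<Rightarrow> ereal) \<Rightarrow> ereal \<Rightarrow> ereal" where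
  "rho_plus f \<xi> = encl_radius {x. f x > \<xi>}"

definition gamma_plus :: "('a::euclidean_space \<Rightarrow> ereal) \<Rightarrow> real \<Rightarrow> ereal" where
  "gamma_plus f t = Inf {\<xi>. rho_plus f \<xi> \<le> ereal t}"

definition hat :: "('a::euclidean_space \<Rightarrow> ereal) \<Rightarrow> 'a \<Rightarrow> ereal" where
  "hat f x = gamma_plus f (norm x)"

end

theory Submission
  imports Defs
begin

lemma sigma_finite_lebesgue: "sigma_finite_measure (lebesgue :: 'a::euclidean_space measure)"
proof
  show "\<exists>A. countable A \<and> A \<subseteq> sets (lebesgue::'a measure) \<and> \<Union> A = space lebesgue \<and> (\<forall>a\<in>A. emeasure lebesgue a \<noteq> \<infinity>)"
  proof (intro exI[of _ "range (\<lambda>n::nat. cball (0::'a) (real n))"] conjI)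
    show "\<Union> (range (\<lambda>n::nat. cball (0::'a) (real n))) = space lebesgue"
    proof (rule set_eqI, rule iffI)
      fix x :: 'a
      obtain n where "norm x \<le> real n" using real_arch_simple by blast
      then show "x \<in> \<Union> (range (\<lambda>n::nat. cball (0::'a) (real n)))" by (auto simp: dist_norm)
    qed simp
    show "countable (range (\<lambda>n::nat. cball (0::'a) (real n)))" by simp
    show "range (\<lambda>n::nat. cball (0::'a) (real n)) \<subseteq> sets lebesgue"
      by (auto intro!: sets_completionI_sets)
    show "\<forall>a\<in>range (\<lambda>n::nat. cball (0::'a) (real n)). emeasure lebesgue a \<noteq> \<infinity>"
    proof
      fix a assume "a \<in> range (\<lambda>n::nat. cball (0::'a) (real n))"
      then obtain n where a: "a = cball (0::'a) (real n)" by auto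
      have "a \<in> sets lborel" using a by simp
      then have "emeasure lebesgue a = emeasure lborel a"
        by (subst emeasure_completion) auto
      then show "emeasure lebesgue a \<noteq> \<infinity>" using a emeasure_lborel_cball_finite[of 0 "real n"] by (simp add: less_top)
    qed
  qed
qed

lemma emeasure_lborel_Ici0: "emeasure lborel {0::real..} = \<infinity>"
proof -
  have "ennreal (real n) \<le> emeasure lborel {0::real..}" for n
  proof -
    have "ennreal (real n) = emeasure lborel {0..real n}" by simp
    also have "\<dots> \<le> emeasure lborel {0::real..}" by (rule emeasure_mono) auto
    finally show ?thesis .
  qed
  show ?thesis
  proof (rule ccontr)
    assume ne: "emeasure lborel {0::real..} \<noteq> \<infinity>"
    have "emeasure lborel {0::real..} < top" using ne by (simp add: less_top)
    then obtain n where lt: "emeasure lborel {0::real..} < of_nat n"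
      using ennreal_Ex_less_of_nat by blast
    have "of_nat n \<le> emeasure lborel {0::real..}"
      using \<open>\<And>n. ennreal (real n) \<le> emeasure lborel {0::real..}\<close>[of n] ennreal_of_nat_eq_real_of_nat by metis
    with lt show False by (simp add: not_le[symmetric])
  qed
qed

lemma layer_cake_le:
  fixes G1 G2 :: "'a::euclidean_space \<Rightarrow> ennreal"
  assumes [measurable]: "G1 \<in> borel_measurable lebesgue" "G2 \<in> borel_measurable lebesgue"
    and le: "\<And>s::real. 0 \<le> s \<Longrightarrow> emeasure lebesgue {x. ennreal s < G1 x} \<le> emeasure lebesgue {x. ennreal s < G2 x}"
  shows "integral\<^sup>N lebesgue G1 \<le> integral\<^sup>N lebesgue G2"
proof -
  interpret L: sigma_finite_measure "lebesgue :: 'a measure" by (rule sigma_finite_lebesgue)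
  interpret P: pair_sigma_finite "lebesgue :: 'a measure" lborel ..
  have rep: "G x = (\<integral>\<^sup>+ s. indicator {s::real. 0 \<le> s \<and> ennreal s < G x} s \<partial>lborel)" for G :: "'a \<Rightarrow> ennreal" and x
  proof (cases "G x")
    case (real t)
    then have "{s::real. 0 \<le> s \<and> ennreal s < G x} = {0..<t}"
      by (auto simp: ennreal_less_iff)
    then show ?thesis using real by simp
  next
    case top
    then have "{s::real. 0 \<le> s \<and> ennreal s < G x} = {0..}" by auto
    then show ?thesis using top by (simp add: emeasure_lborel_Ici0) 
  qed
  have eq: "integral\<^sup>N lebesgue G = (\<integral>\<^sup>+ s. indicator {0..} s * emeasure lebesgue {x. ennreal s < G x} \<partial>lborel)"
    if [measurable]: "G \<in> borel_measurable lebesgue" for G :: "'a \<Rightarrow> ennreal"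
  proof -
    have m: "(\<lambda>(x,s). indicator {s::real. 0 \<le> s \<and> ennreal s < G x} s :: ennreal) \<in> borel_measurable (lebesgue \<Otimes>\<^sub>M lborel)"
      by measurable
    have "integral\<^sup>N lebesgue G = (\<integral>\<^sup>+ x. \<integral>\<^sup>+ s. indicator {s::real. 0 \<le> s \<and> ennreal s < G x} s \<partial>lborel \<partial>lebesgue)"
      by (rule nn_integral_cong) (rule rep)
    also have "\<dots> = (\<integral>\<^sup>+ s. \<integral>\<^sup>+ x. indicator {s::real. 0 \<le> s \<and> ennreal s < G x} s \<partial>lebesgue \<partial>lborel)"
      using P.Fubini[OF m] by simp
    also have "\<dots> = (\<integral>\<^sup>+ s. indicator {0..} s * emeasure lebesgue {x. ennreal s < G x} \<partial>lborel)"
    proof (intro nn_integral_cong)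
      fix s :: real
      have "(\<lambda>x. indicator {s::real. 0 \<le> s \<and> ennreal s < G x} s :: ennreal) = (\<lambda>x. indicator {0..} s * indicator {x. ennreal s < G x} x)"
        by (auto simp: indicator_def)
      have "{x \<in> space lebesgue. ennreal s < G x} \<in> sets lebesgue" by measurable
      moreover have "{x \<in> space lebesgue. ennreal s < G x} = {x. ennreal s < G x}" by simp
      ultimately have "{x. ennreal s < G x} \<in> sets lebesgue" by simp
      moreover note \<open>(\<lambda>x. indicator {s::real. 0 \<le> s \<and> ennreal s < G x} s :: ennreal) = _\<close>
      ultimately show "(\<integral>\<^sup>+ x. indicator {s::real. 0 \<le> s \<and> ennreal s < G x} s \<partial>lebesgue) = indicator {0..} s * emeasure lebesgue {x. ennreal s < G x}"
        by (simp add: nn_integral_cmult)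
    qed
    finally show ?thesis .
  qed
  show ?thesis
    unfolding eq[OF assms(1)] eq[OF assms(2)]
    by (intro nn_integral_mono) (auto simp: indicator_def le intro: mult_left_mono)
qed

lemma encl_exists:
  fixes X :: "'a::euclidean_space set"
  assumes ne: "X \<noteq> {}" and bd: "bounded X"
  shows "\<exists>c r. X \<subseteq> cball c r \<and> (\<forall>c' r'. X \<subseteq> cball c' r' \<longrightarrow> r \<le> r')"
proof -
  define S where "S = {r. \<exists>c. X \<subseteq> cball c r}"
  obtain x0 where x0: "x0 \<in> X" using ne by auto
  have Sne: "S \<noteq> {}" using bd unfolding bounded_subset_cball S_def by auto
  have Sge: "0 \<le> r" if "r \<in> S" for r
  proof -
    from that obtain c where "X \<subseteq> cball c r" unfolding S_def by auto
    with x0 have "dist c x0 \<le> r" by auto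
    then show ?thesis using zero_le_dist[of c x0] by linarith
  qed
  have bdd: "bdd_below S" unfolding bdd_below_def using Sge by blast
  define R0 where "R0 = Inf S"
  define K where "K n = {c. X \<subseteq> cball c (R0 + 1 / real (Suc n))}" for n
  have K_eq: "K n = (\<Inter>x\<in>X. cball x (R0 + 1 / real (Suc n)))" for n
    unfolding K_def by (auto simp: dist_commute)
  have Kc: "compact (K n)" for n
  proof -
    have "closed (K n)" unfolding K_eq by (auto intro!: closed_INT)
    moreover have "K n \<subseteq> cball x0 (R0 + 1 / real (Suc n))" unfolding K_eq using x0 by auto
    then have "bounded (K n)" using bounded_cball bounded_subset by blast
    ultimately show ?thesis using compact_eq_bounded_closed by blast
  qed
  have Kne: "K n \<noteq> {}" for n
  proof -
    have "Inf S < R0 + 1 / real (Suc n)" unfolding R0_def by simp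
    then obtain r where "r \<in> S" "r < R0 + 1 / real (Suc n)"
      using cInf_less_iff[OF Sne bdd] by auto
    then obtain c where "X \<subseteq> cball c r" unfolding S_def by auto
    then have "c \<in> K n" unfolding K_def using \<open>r < _\<close> by (auto simp: subset_iff)
    then show ?thesis by auto
  qed
  have Kmono: "K n \<subseteq> K m" if "m \<le> n" for m n
  proof -
    have "1 / real (Suc n) \<le> 1 / real (Suc m)" using that by (simp add: frac_le)
    then show ?thesis unfolding K_def by (auto simp: subset_iff)
  qed
  obtain c where c: "\<And>n. c \<in> K n" using compact_nest[of K, OF Kc Kne Kmono] by auto
  have "X \<subseteq> cball c R0"
  proof
    fix x assume "x \<in> X"
    then have le: "dist c x \<le> R0 + 1 / real (Suc n)" for n using c[of n] unfolding K_def by auto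
    show "x \<in> cball c R0"
    proof (rule ccontr)
      assume "x \<notin> cball c R0"
      then have "0 < dist c x - R0" by simp
      then obtain n where "inverse (real (Suc n)) < dist c x - R0"
        using reals_Archimedean by blast
      with le[of n] show False by (simp add: field_simps)
    qed
  qed
  moreover have "\<forall>c' r'. X \<subseteq> cball c' r' \<longrightarrow> R0 \<le> r'"
    unfolding R0_def using bdd by (auto intro!: cInf_lower simp: S_def)
  ultimately show ?thesis by blast
qed

lemma encl_radius_char:
  fixes X :: "'a::euclidean_space set"
  assumes ne: "X \<noteq> {}" and bd: "bounded X"
  obtains c R where "encl_radius X = ereal R" "X \<subseteq> cball c R"
    "\<And>c' r'. X \<subseteq> cball c' r' \<Longrightarrow> R \<le> r'" "0 \<le> R"
proof -
  obtain c r where cr: "X \<subseteq> cball c r" "\<forall>c' r'. X \<subseteq> cball c' r' \<longrightarrow> r \<le> r'"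
    using encl_exists[OF ne bd] by blast
  have "(THE r. (\<exists>c. X \<subseteq> cball c r) \<and> (\<forall>c' r'. X \<subseteq> cball c' r' \<longrightarrow> r \<le> r')) = r"
  proof (rule the_equality)
    show "(\<exists>c. X \<subseteq> cball c r) \<and> (\<forall>c' r'. X \<subseteq> cball c' r' \<longrightarrow> r \<le> r')" using cr by blast
  next
    fix r' assume "(\<exists>c. X \<subseteq> cball c r') \<and> (\<forall>c' r''. X \<subseteq> cball c' r'' \<longrightarrow> r' \<le> r'')"
    then show "r' = r" using cr by (meson order_antisym)
  qed
  then have "encl_radius X = ereal r" using ne bd by (simp add: encl_radius_def)
  moreover have "0 \<le> r"
  proof -
    obtain x where "x \<in> X" using ne by auto
    with cr have "dist c x \<le> r" by auto
    then show ?thesis using zero_le_dist[of c x] by linarith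
  qed
  ultimately show ?thesis using cr by (intro that[of r c]) auto
qed

lemma encl_radius_nonneg: "0 \<le> encl_radius (X :: 'a::euclidean_space set)"
proof (cases "X = {} \<or> \<not> bounded X")
  case True then show ?thesis by (auto simp: encl_radius_def)
next
  case False
  then have ne: "X \<noteq> {}" and bd: "bounded X" by auto
  obtain R c where "encl_radius X = ereal R" "X \<subseteq> cball c R"
    "\<And>c' r'. X \<subseteq> cball c' r' \<Longrightarrow> R \<le> r'" "0 \<le> R"
    using encl_radius_char[OF ne bd] by metis
  then show ?thesis by simp
qed

lemma encl_radius_mono:
  fixes X Y :: "'a::euclidean_space set"
  assumes "X \<subseteq> Y" shows "encl_radius X \<le> encl_radius Y"
proof (cases "X = {}")
  case True then show ?thesis using encl_radius_nonneg[of Y] by (simp add: encl_radius_def)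
next
  case XNE: False
  show ?thesis
  proof (cases "bounded Y")
    case False then show ?thesis using XNE assms by (auto simp: encl_radius_def)
  next
    case True
    then have bX: "bounded X" using assms bounded_subset by blast
    have YNE: "Y \<noteq> {}" using XNE assms by auto
    obtain RY cY where Y: "encl_radius Y = ereal RY" "Y \<subseteq> cball cY RY"
      "\<And>c' r'. Y \<subseteq> cball c' r' \<Longrightarrow> RY \<le> r'" "0 \<le> RY"
      using encl_radius_char[OF YNE True] by metis
    obtain RX cX where X: "encl_radius X = ereal RX" "X \<subseteq> cball cX RX"
      "\<And>c' r'. X \<subseteq> cball c' r' \<Longrightarrow> RX \<le> r'" "0 \<le> RX"
      using encl_radius_char[OF XNE bX] by metis
    have "X \<subseteq> cball cY RY" using Y(2) assms by (rule order_trans[rotated])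
    then have "RX \<le> RY" by (rule X(3))
    then show ?thesis using X Y by simp
  qed
qed

lemma threshold:
  fixes \<Psi> :: "ereal \<Rightarrow> ennreal"
  assumes m: "\<And>u v. 0 \<le> u \<Longrightarrow> u \<le> v \<Longrightarrow> \<Psi> u \<le> \<Psi> v"
    and z: "\<Psi> 0 = 0"
    and l: "\<And>v s. 0 < v \<Longrightarrow> s < \<Psi> v \<Longrightarrow> \<exists>w. 0 \<le> w \<and> w < v \<and> s < \<Psi> w"
  shows "\<exists>a\<ge>0. \<forall>v\<ge>0. (s < \<Psi> v \<longleftrightarrow> a < v)"
proof -
  define T where "T = {v. 0 \<le> v \<and> \<Psi> v \<le> s}"
  define a where "a = Sup T"
  have 0: "0 \<in> T" using z by (simp add: T_def)
  then have a0: "0 \<le> a" unfolding a_def by (rule Sup_upper)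
  have "s < \<Psi> v \<longleftrightarrow> a < v" if v0: "0 \<le> v" for v
  proof
    assume sv: "s < \<Psi> v"
    show "a < v"
    proof (rule ccontr)
      assume "\<not> a < v"
      then have va: "v \<le> a" by simp
      have "v \<noteq> 0" using sv z by auto
      then have "0 < v" using v0 by simp
      then obtain w where w: "0 \<le> w" "w < v" "s < \<Psi> w" using l sv by blast
      then have "w < Sup T" using va a_def by simp
      then obtain y where y: "y \<in> T" "w < y" using less_Sup_iff by blast
      then have "\<Psi> w \<le> \<Psi> y" using m w by simp
      also have "\<dots> \<le> s" using y by (simp add: T_def)
      finally show False using w by simp
    qed
  next
    assume av: "a < v"
    show "s < \<Psi> v"
    proof (rule ccontr)
      assume "\<not> s < \<Psi> v"
      then have "v \<in> T" using v0 by (simp add: T_def not_less)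
      then have "v \<le> a" unfolding a_def by (rule Sup_upper)
      then show False using av by simp
    qed
  qed
  then show ?thesis using a0 by blast
qed

lemma young_Psi:
  fixes \<phi> :: "ennreal \<Rightarrow> ennreal" and r :: real
  assumes y: "young_function \<phi>" and r: "0 < r"
  defines "\<Psi> \<equiv> \<lambda>v::ereal. \<phi> (ennreal (1 / r) * e2ennreal \<bar>v\<bar>)"
  shows "\<exists>a\<ge>0. \<forall>v\<ge>0. (s < \<Psi> v \<longleftrightarrow> a < v)"
proof (rule threshold)
  have mono: "mono \<phi>" and phi0: "\<phi> 0 = 0"
    and lc: "\<And>t. 0 < t \<Longrightarrow> (\<phi> \<longlongrightarrow> \<phi> t) (at_left t)"
    using y by (auto simp: young_function_def)
  show "\<Psi> u \<le> \<Psi> v" if "0 \<le> u" "u \<le> v" for u v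
  proof -
    have "e2ennreal \<bar>u\<bar> \<le> e2ennreal \<bar>v\<bar>"
      using that by (intro e2ennreal_mono) auto
    then have "ennreal (1 / r) * e2ennreal \<bar>u\<bar> \<le> ennreal (1 / r) * e2ennreal \<bar>v\<bar>"
      by (rule mult_left_mono) simp
    then show ?thesis unfolding \<Psi>_def using mono by (simp add: monoD)
  qed
  show "\<Psi> 0 = 0" unfolding \<Psi>_def using phi0 by (simp add: e2ennreal_neg)
  show "\<exists>w. 0 \<le> w \<and> w < v \<and> s < \<Psi> w" if v: "0 < v" and sv: "s < \<Psi> v" for v s
  proof -
    define u where "u = ennreal (1 / r) * e2ennreal v"
    have absv: "\<bar>v\<bar> = v" using v by simp
    have ev: "0 < e2ennreal v" using v
      by (metis zero_ennreal_def type_definition_ennreal' zero_less_iff_neq_zero enn2ereal_e2ennreal linorder_not_le order_less_imp_not_less)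
    have u0: "0 < u" unfolding u_def using ev r
      by (simp add: ennreal_zero_less_mult_iff)
    have su: "s < \<phi> u" using sv unfolding \<Psi>_def u_def absv .
    have "eventually (\<lambda>z. s < \<phi> z) (at_left u)"
      using lc[OF u0] su by (rule order_tendstoD)
    then obtain b where b: "b < u" "\<And>z. b < z \<Longrightarrow> z < u \<Longrightarrow> s < \<phi> z"
      using eventually_at_left[of 0 u] u0 by auto
    obtain z where z: "b < z" "z < u" using dense[OF b(1)] by blast
    define w where "w = enn2ereal (z * ennreal r)"
    have w0: "0 \<le> w" unfolding w_def by simp
    have rr: "ennreal (1 / r) * ennreal r = 1" using r by (simp add: ennreal_mult[symmetric])
    have "\<bar>w\<bar> = w" using w0 by simp
    then have uw: "ennreal (1 / r) * e2ennreal \<bar>w\<bar> = z"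
      unfolding w_def using rr by (simp add: e2ennreal_enn2ereal mult.left_commute)
    have "w < v" unfolding w_def using r v z(2) unfolding u_def
      by (smt (verit, best) divide_eq_1_iff divide_less_0_1_iff
    divide_less_ennreal e2ennreal_enn2ereal e2ennreal_mono ennreal_1
    ennreal_eq_0_iff ennreal_inj ennreal_less_top ennreal_mult
    linorder_not_le mult.commute mult.left_commute mult.right_neutral
    mult_divide_eq_ennreal times_divide_eq_right top_neq_ennreal)
    moreover have "s < \<Psi> w" unfolding \<Psi>_def uw using b(2) z by blast
    ultimately show ?thesis using w0 by blast
  qed
qed

lemma rho_antimono: "\<xi> \<le> \<xi>' \<Longrightarrow> rho_plus f \<xi>' \<le> rho_plus f \<xi>"
  unfolding rho_plus_def by (rule encl_radius_mono) auto

lemma gamma_ge: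
  assumes "ereal t < rho_plus f \<xi>'" shows "\<xi>' \<le> gamma_plus f t"
  unfolding gamma_plus_def
proof (rule Inf_greatest)
  fix \<eta> assume "\<eta> \<in> {\<xi>. rho_plus f \<xi> \<le> ereal t}"
  then have h: "rho_plus f \<eta> \<le> ereal t" by simp
  show "\<xi>' \<le> \<eta>"
  proof (rule ccontr)
    assume "\<not> \<xi>' \<le> \<eta>"
    then have "rho_plus f \<xi>' \<le> rho_plus f \<eta>" by (intro rho_antimono) simp
    with h assms show False by simp
  qed
qed

lemma gamma_antimono: "t \<le> t' \<Longrightarrow> gamma_plus f t' \<le> gamma_plus f t"
  unfolding gamma_plus_def
proof (rule Inf_superset_mono, rule subsetI)
  fix \<eta> assume tt: "t \<le> t'" and "\<eta> \<in> {\<xi>. rho_plus f \<xi> \<le> ereal t}"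
  then have "rho_plus f \<eta> \<le> ereal t" by simp
  also have "\<dots> \<le> ereal t'" using tt by simp
  finally show "\<eta> \<in> {\<xi>. rho_plus f \<xi> \<le> ereal t'}" by simp
qed

lemma hat_nonneg:
  fixes f :: "'a::euclidean_space \<Rightarrow> ereal"
  assumes "\<forall>x. 0 \<le> f x" shows "0 \<le> hat f x"
  unfolding hat_def gamma_plus_def
proof (rule Inf_greatest)
  fix \<eta> assume "\<eta> \<in> {\<xi>. rho_plus f \<xi> \<le> ereal (norm x)}"
  then have h: "rho_plus f \<eta> \<le> ereal (norm x)" by simp
  show "0 \<le> \<eta>"
  proof (rule ccontr)
    assume "\<not> 0 \<le> \<eta>"
    then have "\<eta> < f y" for y using assms[rule_format, of y] by (simp add: not_le less_le_trans)
    then have "{y. \<eta> < f y} = UNIV" by blast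
    then have "rho_plus f \<eta> = \<infinity>"
      unfolding rho_plus_def encl_radius_def using not_bounded_UNIV by auto
    with h show False by simp
  qed
qed

lemma radial_sets:
  fixes P :: "real \<Rightarrow> bool"
  assumes down: "\<And>t t'. t \<le> t' \<Longrightarrow> P t' \<Longrightarrow> P t"
  shows "{x::'a::euclidean_space. P (norm x)} \<in> sets borel"
proof (cases "\<forall>t. P t")
  case True then show ?thesis by simp
next
  case False
  then obtain t0 where t0: "\<not> P t0" by auto
  show ?thesis
  proof (cases "{t. P t} = {}")
    case True then show ?thesis by simp
  next
    case ne: False
    have ub: "t < t0" if "P t" for t using down[of t0 t] that t0 by force
    have bdd: "bdd_above {t. P t}" unfolding bdd_above_def using ub by (auto intro: less_imp_le)
    define b where "b = Sup {t. P t}"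
    have eq: "{x::'a. P (norm x)} = ball 0 b \<union> (if P b then sphere 0 b else {})"
    proof (intro set_eqI iffI)
      fix x :: 'a assume "x \<in> {x::'a. P (norm x)}"
      then have Px: "P (norm x)" by simp
      then have "norm x \<le> b" unfolding b_def using bdd by (auto intro: cSup_upper)
      then show "x \<in> ball 0 b \<union> (if P b then sphere 0 b else {})"
        using Px by (cases "norm x = b") auto
    next
      fix x :: 'a assume "x \<in> ball 0 b \<union> (if P b then sphere 0 b else {})"
      then consider "norm x < b" | "P b" "norm x = b" by (auto split: if_splits)
      then show "x \<in> {x::'a. P (norm x)}"
      proof cases
        case 1
        then obtain t where "P t" "norm x < t"
          using less_cSup_iff[OF ne bdd] unfolding b_def by auto
        then show ?thesis using down[of "norm x" t] by simp
      qed auto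
    qed
    show ?thesis unfolding eq by auto
  qed
qed

lemma hat_sets:
  fixes f :: "'a::euclidean_space \<Rightarrow> ereal"
  shows "{x. a < hat f x} \<in> sets lebesgue"
proof -
  have "{x::'a. a < gamma_plus f (norm x)} \<in> sets borel"
    by (rule radial_sets) (meson gamma_antimono less_le_trans)
  then show ?thesis unfolding hat_def by (intro sets_completionI_sets) simp
qed

lemma one_level:
  fixes f :: "'a::euclidean_space \<Rightarrow> ereal"
  assumes "\<xi> < \<xi>'" and XS: "{x. \<xi>' < f x} \<in> sets lebesgue"
  shows "emeasure lebesgue {x. \<xi>' < f x} \<le> emeasure lebesgue {x. \<xi> < hat f x}"
proof -
  define X where "X = {x. \<xi>' < f x}"
  have HS: "{x. \<xi> < hat f x} \<in> sets lebesgue" by (rule hat_sets)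
  have rho: "rho_plus f \<xi>' = encl_radius X" unfolding rho_plus_def X_def ..
  have key: "\<xi> < hat f x" if "ereal (norm x) < rho_plus f \<xi>'" for x
    using gamma_ge[OF that] assms(1) unfolding hat_def by simp
  show ?thesis
  proof (cases "X = {}")
    case True then show ?thesis unfolding X_def by simp
  next
    case ne: False
    show ?thesis
    proof (cases "bounded X")
      case False
      then have "rho_plus f \<xi>' = \<infinity>" using ne rho by (simp add: encl_radius_def)
      then have "{x. \<xi> < hat f x} = UNIV" using key by auto
      then show ?thesis using XS by (intro emeasure_mono) auto
    next
      case True
      obtain R c where R: "encl_radius X = ereal R" "X \<subseteq> cball c R"
        "\<And>c' r'. X \<subseteq> cball c' r' \<Longrightarrow> R \<le> r'" "0 \<le> R"
        using encl_radius_char[OF ne True] by metis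
      have ballH: "ball 0 R \<subseteq> {x. \<xi> < hat f x}" using key rho R(1) by auto
      have "emeasure lebesgue X \<le> emeasure lebesgue (cball c R)"
        using R(2) by (intro emeasure_mono) auto
      also have "\<dots> = emeasure lborel (cball c R)"
        by (subst emeasure_completion) auto
      also have "\<dots> = emeasure lborel (ball (0::'a) R)"
        using R(4) by (simp add: emeasure_cball emeasure_ball)
      also have "\<dots> = emeasure lebesgue (ball (0::'a) R)"
        by (subst emeasure_completion) auto
      also have "\<dots> \<le> emeasure lebesgue {x. \<xi> < hat f x}"
        using ballH HS by (intro emeasure_mono) auto
      finally show ?thesis unfolding X_def .
    qed
  qed
qed

lemma distrib:
  fixes f :: "'a::euclidean_space \<Rightarrow> ereal"
  assumes fm: "f \<in> borel_measurable lebesgue" and "0 \<le> \<xi>"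
  shows "emeasure lebesgue {x. \<xi> < f x} \<le> emeasure lebesgue {x. \<xi> < hat f x}"
proof (cases \<xi>)
  case PInf then show ?thesis by simp
next
  case MInf then show ?thesis using assms by simp
next
  case (real q)
  note [measurable] = fm
  have fS: "{x. c < f x} \<in> sets lebesgue" for c
  proof -
    have "{x \<in> space lebesgue. c < f x} \<in> sets lebesgue" by measurable
    then show ?thesis by simp
  qed
  define A where "A n = {x. ereal (q + 1 / real (Suc n)) < f x}" for n
  have AS: "range A \<subseteq> sets lebesgue" unfolding A_def using fS by auto
  have inc: "incseq A"
  proof (rule incseq_SucI)
    fix n
    have "1 / real (Suc (Suc n)) \<le> 1 / real (Suc n)" by (simp add: frac_le)
    then have le: "ereal (q + 1 / real (Suc (Suc n))) \<le> ereal (q + 1 / real (Suc n))" by simp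
    show "A n \<subseteq> A (Suc n)" unfolding A_def
    proof
      fix x assume "x \<in> {x. ereal (q + 1 / real (Suc n)) < f x}"
      then have "ereal (q + 1 / real (Suc n)) < f x" by simp
      with le have "ereal (q + 1 / real (Suc (Suc n))) < f x" by (rule le_less_trans)
      then show "x \<in> {x. ereal (q + 1 / real (Suc (Suc n))) < f x}" by simp
    qed
  qed
  have U: "{x. \<xi> < f x} = (\<Union>n. A n)"
  proof (intro set_eqI iffI)
    fix x assume "x \<in> {x. \<xi> < f x}"
    then have qx: "ereal q < f x" using real by simp
    show "x \<in> (\<Union>n. A n)"
    proof (cases "f x")
      case (real y)
      then have "0 < y - q" using qx by simp
      then obtain n where "inverse (real (Suc n)) < y - q" using reals_Archimedean by blast
      then show ?thesis using real by (auto simp: A_def field_simps)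
    qed (use qx in \<open>auto simp: A_def\<close>)
  next
    fix x assume "x \<in> (\<Union>n. A n)"
    then obtain n where "ereal (q + 1 / real (Suc n)) < f x" by (auto simp: A_def)
    moreover have "ereal q < ereal (q + 1 / real (Suc n))" by simp
    ultimately have "ereal q < f x" by (rule less_trans[rotated])
    then show "x \<in> {x. \<xi> < f x}" using real by simp
  qed
  have "emeasure lebesgue {x. \<xi> < f x} = (SUP n. emeasure lebesgue (A n))"
    unfolding U using SUP_emeasure_incseq[OF AS inc] by simp
  also have "\<dots> \<le> emeasure lebesgue {x. \<xi> < hat f x}"
  proof (rule SUP_least)
    fix n
    have "\<xi> < ereal (q + 1 / real (Suc n))" using real by simp
    then show "emeasure lebesgue (A n) \<le> emeasure lebesgue {x. \<xi> < hat f x}"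
      unfolding A_def by (rule one_level) (rule fS)
  qed
  finally show ?thesis .
qed

theorem lemma17:
  fixes \<phi> :: "ennreal \<Rightarrow> ennreal" and f :: "'a::euclidean_space \<Rightarrow> ereal"
  assumes "young_function \<phi>"
    and "f \<in> borel_measurable lebesgue"
    and "\<forall>x. 0 \<le> f x"
  shows "orlicz_norm \<phi> f \<le> orlicz_norm \<phi> (hat f)"
proof -
  note fm[measurable] = assms(2)
  have fS: "{x. c < f x} \<in> sets lebesgue" for c
  proof -
    have "{x \<in> space lebesgue. c < f x} \<in> sets lebesgue" by measurable
    then show ?thesis by simp
  qed
  have hpos: "0 \<le> hat f x" for x using hat_nonneg[OF assms(3)] .
  have key: "(\<integral>\<^sup>+ x. \<phi> (ennreal (1 / r) * e2ennreal \<bar>f x\<bar>) \<partial>lebesgue)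
      \<le> (\<integral>\<^sup>+ x. \<phi> (ennreal (1 / r) * e2ennreal \<bar>hat f x\<bar>) \<partial>lebesgue)" if r: "0 < r" for r
  proof -
    define \<Psi> where "\<Psi> = (\<lambda>v::ereal. \<phi> (ennreal (1 / r) * e2ennreal \<bar>v\<bar>))"
    have thr: "\<exists>a\<ge>0. \<forall>v\<ge>0. (s < \<Psi> v \<longleftrightarrow> a < v)" for s
      unfolding \<Psi>_def by (rule young_Psi[OF assms(1) r])
    have lvl: "\<exists>a\<ge>0. {x. s < \<Psi> (h x)} = {x. a < h x}" if "\<And>x. 0 \<le> h x" for s and h :: "'a \<Rightarrow> ereal"
    proof -
      obtain a where a: "0 \<le> a" "\<And>v. 0 \<le> v \<Longrightarrow> (s < \<Psi> v \<longleftrightarrow> a < v)" using thr[of s] by blast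
      have "{x. s < \<Psi> (h x)} = {x. a < h x}" using a(2) that by auto
      then show ?thesis using a(1) by blast
    qed
    have meas: "(\<lambda>x. \<Psi> (h x)) \<in> borel_measurable lebesgue"
      if h0: "\<And>x. 0 \<le> h x" and hS: "\<And>c. {x. c < h x} \<in> sets lebesgue" for h :: "'a \<Rightarrow> ereal"
    proof (rule borel_measurableI_greater)
      fix s
      obtain a where "{x. s < \<Psi> (h x)} = {x. a < h x}" using lvl[of h s, OF h0] by blast
      then show "{x \<in> space lebesgue. s < \<Psi> (h x)} \<in> sets lebesgue" using hS[of a] by simp
    qed
    have "integral\<^sup>N lebesgue (\<lambda>x. \<Psi> (f x)) \<le> integral\<^sup>N lebesgue (\<lambda>x. \<Psi> (hat f x))"
    proof (rule layer_cake_le)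
      show "(\<lambda>x. \<Psi> (f x)) \<in> borel_measurable lebesgue"
        using meas[of f] assms(3) fS by blast
      show "(\<lambda>x. \<Psi> (hat f x)) \<in> borel_measurable lebesgue"
        using meas[of "hat f"] hpos hat_sets by blast
      fix s :: real
      obtain a where a: "0 \<le> a" "\<And>v. 0 \<le> v \<Longrightarrow> (ennreal s < \<Psi> v \<longleftrightarrow> a < v)"
        using thr[of "ennreal s"] by blast
      have e1: "{x. ennreal s < \<Psi> (f x)} = {x. a < f x}" using a(2) assms(3) by auto
      have e2: "{x. ennreal s < \<Psi> (hat f x)} = {x. a < hat f x}" using a(2) hpos by auto
      show "emeasure lebesgue {x. ennreal s < \<Psi> (f x)} \<le> emeasure lebesgue {x. ennreal s < \<Psi> (hat f x)}"
        unfolding e1 e2 by (rule distrib[OF assms(2) a(1)])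
    qed
    then show ?thesis unfolding \<Psi>_def .
  qed
  show ?thesis
    unfolding orlicz_norm_def
  proof (rule Inf_superset_mono, rule image_mono, rule subsetI)
    fix r assume "r \<in> {r. 0 < r \<and> (\<integral>\<^sup>+ x. \<phi> (ennreal (1 / r) * e2ennreal \<bar>hat f x\<bar>) \<partial>lebesgue) \<le> 1}"
    then have r: "0 < r" and le1: "(\<integral>\<^sup>+ x. \<phi> (ennreal (1 / r) * e2ennreal \<bar>hat f x\<bar>) \<partial>lebesgue) \<le> 1" by auto
    show "r \<in> {r. 0 < r \<and> (\<integral>\<^sup>+ x. \<phi> (ennreal (1 / r) * e2ennreal \<bar>f x\<bar>) \<partial>lebesgue) \<le> 1}"
      using key[OF r] le1 r by (auto intro: order_trans)
  qed
qed

end
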